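(* Let $\tau$ be a $T_1$-topology on the bicyclic monoid $\mathcal{C}(p,q)$ such that $(\mathcal{C}(p,q),\tau)$ is a semitopological semigroup (i.e. the semigroup operation is separately continuous) and the topological space $(\mathcal{C}(p,q),\tau)$ is a Baire space. Then $\tau$ is the discrete topology.
   Context: The bicyclic monoid $\mathcal{C}(p,q)$ is the monoid with identity $1$ generated by two elements $p,q$ subject only to $pq=1$. Every element has a unique form $q^ip^j$ with $i,j\in\omega=\{0,1,2,\dots\}$, and multiplication is $q^kp^l\cdot q^mp^n = q^{k-l+m}p^n$ if $l<m$, $=q^kp^n$ if $l=m$, $=q^kp^{l-m+n}$ if $l>m$. A topological space $X$ is Baire if for every sequence $A_1,A_2,\dots$ of dense open subsets of $X$ the intersection $\bigcap_{i=1}^\infty A_i$ is dense in $X$. *)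

theory Defs
  imports "HOL-Analysis.Analysis"
begin

text \<open>The bicyclic monoid C(p,q): the pair (i,j) represents the element q^i p^j.\<close>
type_synonym bicyclic = "nat \<times> nat"

definition bicyclic_mult :: "bicyclic \<Rightarrow> bicyclic \<Rightarrow> bicyclic" where
  "bicyclic_mult x y = (case x of (k, l) \<Rightarrow> case y of (m, n) \<Rightarrow>
     if l < m then (k + m - l, n)
     else if l = m then (k, n)
     else (k, l + n - m))"

definition baire_space :: "'a topology \<Rightarrow> bool" where
  "baire_space X \<longleftrightarrow>
     (\<forall>A :: nat \<Rightarrow> 'a set.
        (\<forall>i. openin X (A i) \<and> X closure_of (A i) = topspace X)
        \<longrightarrow> X closure_of (topspace X \<inter> (\<Inter>i. A i)) = topspace X)"

definition semitopological :: "'a topology \<Rightarrow> ('a \<Rightarrow> 'a \<Rightarrow> 'a) \<Rightarrow> bool" where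
  "semitopological X f \<longleftrightarrow>
     (\<forall>a \<in> topspace X. continuous_map X X (\<lambda>x. f a x) \<and> continuous_map X X (\<lambda>x. f x a))"

end

theory Submission
  imports Defs
begin

lemma fin_left: "finite {y. bicyclic_mult (a,b) y = (c,d)}"
proof (rule finite_subset)
  show "{y. bicyclic_mult (a,b) y = (c,d)} \<subseteq> {..c+a+b} \<times> {..d+a+b}"
    by (auto simp: bicyclic_mult_def split: if_splits)
qed auto

lemma fin_right: "finite {y. bicyclic_mult y (a,b) = (c,d)}"
proof (rule finite_subset)
  show "{y. bicyclic_mult y (a,b) = (c,d)} \<subseteq> {..c+a+b} \<times> {..d+a+b}"
    by (auto simp: bicyclic_mult_def split: if_splits)
qed auto

lemma finite_open_point:
  assumes T: "t1_space X" and S: "openin X S" "finite S" and w: "w \<in> S"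
  shows "openin X {w}"
proof -
  have "closedin X (S - {w})"
    using S T by (meson Diff_subset finite_subset openin_subset subset_trans t1_space_closedin_finite)
  then have "openin X (S - (S - {w}))" using S openin_diff by blast
  moreover have "S - (S - {w}) = {w}" using w by blast
  ultimately show ?thesis by simp
qed

lemma pull_point:
  assumes T: "t1_space X" and c: "continuous_map X X g" and fin: "finite {y. g y = z}"
    and o: "openin X {z}" and gw: "g w = z" and top: "topspace X = UNIV"
  shows "openin X {w}"
proof -
  have "openin X {x \<in> topspace X. g x \<in> {z}}" using c o openin_continuous_map_preimage by blast
  moreover have "{x \<in> topspace X. g x \<in> {z}} = {y. g y = z}" using top by auto
  ultimately show ?thesis using finite_open_point[OF T _ fin] gw by auto
qed

theorem theorem1:
  fixes \<tau> :: "bicyclic topology"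
  assumes "topspace \<tau> = UNIV"
    and "t1_space \<tau>"
    and "semitopological \<tau> bicyclic_mult"
    and "baire_space \<tau>"
  shows "\<tau> = discrete_topology UNIV"
proof -
  note top = assms(1) and T = assms(2)
  have lc: "continuous_map \<tau> \<tau> (bicyclic_mult a)" for a
    using assms(3) top unfolding semitopological_def by (metis UNIV_I)
  have rc: "continuous_map \<tau> \<tau> (\<lambda>x. bicyclic_mult x a)" for a
    using assms(3) top unfolding semitopological_def by (metis UNIV_I)
  have "\<exists>z. openin \<tau> {z}"
  proof (rule ccontr)
    assume no: "\<not> (\<exists>z. openin \<tau> {z})"
    define A where "A k = UNIV - {prod_decode k}" for k
    have "openin \<tau> (A k) \<and> \<tau> closure_of (A k) = topspace \<tau>" for k
    proof
      show "openin \<tau> (A k)"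
      proof -
        have "closedin \<tau> {prod_decode k}" using T top by (simp add: closedin_t1_singleton)
        then have "openin \<tau> (topspace \<tau> - {prod_decode k})" by (rule openin_diff[OF openin_topspace])
        then show ?thesis using top by (simp add: A_def)
      qed
      have "\<tau> interior_of {prod_decode k} = {}"
      proof -
        have "\<tau> interior_of {prod_decode k} \<subseteq> {prod_decode k}" by (rule interior_of_subset)
        moreover have "openin \<tau> (\<tau> interior_of {prod_decode k})" by simp
        ultimately show ?thesis using no by (metis subset_singletonD)
      qed
      then show "\<tau> closure_of (A k) = topspace \<tau>"
        unfolding A_def using closure_of_complement[of \<tau> "{prod_decode k}"] top by simp
    qed
    then have "\<tau> closure_of (topspace \<tau> \<inter> (\<Inter>i. A i)) = topspace \<tau>"
      using assms(4) unfolding baire_space_def by blast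
    moreover have "(\<Inter>i. A i) = {}"
    proof -
      have "x \<notin> (\<Inter>i. A i)" for x
        using prod_encode_inverse[of x] unfolding A_def by (metis DiffE INT_E UNIV_I singletonI)
      then show ?thesis by blast
    qed
    ultimately show False using top by simp
  qed
  then obtain i j where ij: "openin \<tau> {(i,j)}" by auto
  have "openin \<tau> {(m,n)}" for m n
  proof -
    have e1: "bicyclic_mult (i,n) (n,j) = (i,j)" by (simp add: bicyclic_mult_def)
    have o1: "openin \<tau> {(i,n)}"
      using pull_point[OF T rc fin_right ij e1 top] .
    have e2: "bicyclic_mult (i,m) (m,n) = (i,n)" by (simp add: bicyclic_mult_def)
    show ?thesis using pull_point[OF T lc fin_left o1 e2 top] .
  qed
  then show ?thesis using top by (metis discrete_topology_unique surj_pair)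
qed

end
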